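(* Let $A,r,\beta_0,a,\mu,d>0$ and consider the system $$\dot S=S(A-S)-\beta_0IS,\qquad \dot I=\beta_0IS-(\mu+d)I-\frac{rI}{a+I},\qquad \dot R=\frac{rI}{a+I}-\mu R.$$ Then the region $$\mathcal{M}=\left\{(S,I,R)\in(\mathbb{R}_0^+)^3:\ 0\le S\le A,\ 0\le S+I+R\le \frac{A(\mu+A)}{\mu},\ I,R\ge0\right\}$$ is positively flow-invariant, i.e. every trajectory starting in $\mathcal{M}$ remains in $\mathcal{M}$ for all $t\ge0$.
   Context: $S,I,R$ denote susceptible, infectious and recovered populations; $\mu$ is the natural death rate, $d$ the disease-induced death rate, $r$ the cure rate, $a$ a saturation constant of treatment, $\beta_0$ the transmission rate and $A$ the carrying capacity of susceptibles. $\mathbb{R}_0^+=[0,\infty)$. *)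

theory Defs
  imports "HOL-Analysis.Analysis"
begin

definition regionM :: "real \<Rightarrow> real \<Rightarrow> (real \<times> real \<times> real) set" where
  "regionM A \<mu> = {(S, I, R). 0 \<le> S \<and> 0 \<le> I \<and> 0 \<le> R \<and> S \<le> A \<and>
      0 \<le> S + I + R \<and> S + I + R \<le> A * (\<mu> + A) / \<mu>}"

end

theory Submission imports Defs begin

lemma stays_nonneg:
  fixes f f' h :: "real \<Rightarrow> real"
  assumes der: "\<And>t. t \<ge> 0 \<Longrightarrow> (f has_real_derivative f' t) (at t within {0..})"
    and ineq: "\<And>t. t \<ge> 0 \<Longrightarrow> f' t \<ge> f t * h t"
    and hc: "\<And>t. t \<ge> 0 \<Longrightarrow> f t = 0 \<Longrightarrow> continuous (at t within {0..}) h"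
    and f0: "f 0 \<ge> 0"
    and t: "t \<ge> 0"
  shows "f t \<ge> 0"
proof (rule ccontr)
  assume "\<not> f t \<ge> 0"
  hence ft: "f t < 0" by simp
  have cont: "continuous_on {0..} f"
      unfolding continuous_on_eq_continuous_within
  proof
    fix x :: real assume "x \<in> {0..}"
    thus "continuous (at x within {0..}) f" using der[of x] by (auto intro: DERIV_continuous)
  qed
  have contt: "continuous_on {0..t} f" using cont by (rule continuous_on_subset) auto
  define Z where "Z = {0..t} \<inter> f -` {0..}"
  have cZ: "closed Z" unfolding Z_def by (rule continuous_closed_preimage[OF contt]) auto
  have Z0: "0 \<in> Z" using f0 t unfolding Z_def by auto
  have bZ: "bdd_above Z" unfolding Z_def by (rule bdd_aboveI[of _ t]) auto
  define t0 where "t0 = Sup Z"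
  have t0Z: "t0 \<in> Z" unfolding t0_def using closed_contains_Sup[OF _ bZ cZ] Z0 by auto
  have t0ge: "t0 \<ge> 0" and t0le: "t0 \<le> t" and ft0: "f t0 \<ge> 0" using t0Z unfolding Z_def by auto
  have t0lt: "t0 < t" using t0le ft ft0 by (cases "t0 = t") auto
  have upper: "x \<le> t0" if "x \<in> Z" for x unfolding t0_def by (rule cSup_upper[OF that bZ])
  have cont2: "continuous_on {t0..t} f" using contt by (rule continuous_on_subset) (use t0ge in auto)
  obtain z where z: "z \<ge> t0" "z \<le> t" "f z = 0"
    using IVT2'[of f t 0 t0, OF _ ft0 t0le cont2] ft by auto
  have "z \<in> Z" using z t0ge unfolding Z_def by auto
  hence "z = t0" using upper z by force
  hence fz0: "f t0 = 0" using z by simp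
  have neg: "f x < 0" if "t0 < x" "x \<le> t" for x
  proof (rule ccontr)
    assume "\<not> f x < 0"
    hence "x \<in> Z" using that t0ge unfolding Z_def by auto
    thus False using upper that by force
  qed
  obtain \<delta> where dp: "\<delta> > 0" and dh: "\<And>x. x \<in> {0..} \<Longrightarrow> dist x t0 < \<delta> \<Longrightarrow> dist (h x) (h t0) < 1"
    using hc[OF t0ge fz0] unfolding continuous_within_eps_delta by (meson zero_less_one)
  define K where "K = \<bar>h t0\<bar> + 1"
  define b where "b = t0 + min (\<delta>/2) (t - t0)"
  have b: "t0 < b" "b \<le> t" "b - t0 < \<delta>" using dp t0lt unfolding b_def by auto
  define g where "g x = (f x)^2 * exp (-2*K*x)" for x
  have gder: "(g has_real_derivative (2 * f x * f' x * exp (-2*K*x) + (f x)^2 * (exp (-2*K*x) * (-2*K)))) (at x within {0..})"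
    if "x \<ge> 0" for x
    unfolding g_def
    using der[OF that]
    by (auto intro!: derivative_eq_intros)
  have gcont: "continuous_on {t0..b} g"
  proof -
    have "continuous_on {0..} g"
      unfolding continuous_on_eq_continuous_within
    proof
      fix x :: real assume "x \<in> {0..}"
      thus "continuous (at x within {0..}) g" using gder[of x] by (auto intro: DERIV_continuous)
    qed
    thus ?thesis by (rule continuous_on_subset) (use t0ge in auto)
  qed
  have gdiff: "g differentiable at x" if "t0 < x" "x < b" for x
  proof -
    have "x \<in> interior {0::real..}" using that t0ge by auto
    hence "at x within {0..} = at x" by (rule at_within_interior)
    hence "(g has_real_derivative (2 * f x * f' x * exp (-2*K*x) + (f x)^2 * (exp (-2*K*x) * (-2*K)))) (at x)" using gder[of x] that t0ge by simp
    thus ?thesis using real_differentiable_def by blast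
  qed
  obtain l z where lz: "t0 < z" "z < b" "(g has_real_derivative l) (at z)" "g b - g t0 = (b - t0) * l"
    using MVT[OF b(1) gcont gdiff] by blast
  have "z \<in> interior {0::real..}" using lz t0ge by auto
  hence "at z within {0..} = at z" by (rule at_within_interior)
  hence l: "l = 2 * f z * f' z * exp (-2*K*z) + (f z)^2 * (exp (-2*K*z) * (-2*K))"
  proof -
    have "(g has_real_derivative (2 * f z * f' z * exp (-2*K*z) + (f z)^2 * (exp (-2*K*z) * (-2*K)))) (at z)"
      using gder[of z] lz t0ge \<open>at z within {0..} = at z\<close> by simp
    thus ?thesis using lz(3) DERIV_unique by blast
  qed
  have fzn: "f z < 0" using neg lz b by auto
  have hz: "h z \<le> K" using dh[of z] lz b t0ge unfolding K_def dist_real_def by auto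
  have "f z * f' z \<le> f z * (f z * h z)" using ineq[of z] fzn lz t0ge
    by (simp add: mult_le_cancel_left)
  also have "\<dots> \<le> (f z)^2 * K" using hz mult_left_mono[OF hz, of "f z * f z"] by (simp add: power2_eq_square mult.assoc)
  finally have "f z * f' z \<le> (f z)^2 * K" .
  hence "l \<le> 0" unfolding l
  proof -
    assume a: "f z * f' z \<le> (f z)^2 * K"
    have "2 * f z * f' z * exp (-2*K*z) \<le> 2 * ((f z)^2 * K) * exp (-2*K*z)"
      using a by (simp add: mult.assoc)
    thus "2 * f z * f' z * exp (-2*K*z) + (f z)^2 * (exp (-2*K*z) * (-2*K)) \<le> 0"
      by (simp add: algebra_simps)
  qed
  hence "(b - t0) * l \<le> 0" using b by (simp add: mult_nonneg_nonpos)
  hence "g b \<le> g t0" using lz(4) by simp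
  moreover have "g t0 = 0" unfolding g_def using fz0 by simp
  moreover have "g b > 0" unfolding g_def using neg[of b] b by simp
  ultimately show False by simp
qed

theorem lemma3p1:
  fixes A r \<beta>\<^sub>0 a \<mu> d :: real
    and S I R :: "real \<Rightarrow> real"
  assumes "A > 0" "r > 0" "\<beta>\<^sub>0 > 0" "a > 0" "\<mu> > 0" "d > 0"
    and dS: "\<And>t. t \<ge> 0 \<Longrightarrow>
      (S has_real_derivative (S t * (A - S t) - \<beta>\<^sub>0 * I t * S t)) (at t within {0..})"
    and dI: "\<And>t. t \<ge> 0 \<Longrightarrow>
      (I has_real_derivative (\<beta>\<^sub>0 * I t * S t - (\<mu> + d) * I t - r * I t / (a + I t))) (at t within {0..})"
    and dR: "\<And>t. t \<ge> 0 \<Longrightarrow>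
      (R has_real_derivative (r * I t / (a + I t) - \<mu> * R t)) (at t within {0..})"
    and init: "(S 0, I 0, R 0) \<in> regionM A \<mu>"
  shows "\<forall>t \<ge> 0. (S t, I t, R t) \<in> regionM A \<mu>"
proof -
  note pos = assms(1-6)
  have i0: "0 \<le> S 0" "0 \<le> I 0" "0 \<le> R 0" "S 0 \<le> A" "S 0 + I 0 + R 0 \<le> A * (\<mu> + A) / \<mu>"
    using init unfolding regionM_def by auto
  have Sc: "continuous (at t within {0..}) S" if "t \<ge> 0" for t
    using dS[OF that] by (rule DERIV_continuous)
  have Ic: "continuous (at t within {0..}) I" if "t \<ge> 0" for t
    using dI[OF that] by (rule DERIV_continuous)
  have Inn: "I t \<ge> 0" if "t \<ge> 0" for t
  proof (rule stays_nonneg[where f = I and h = "\<lambda>t. \<beta>\<^sub>0 * S t - (\<mu> + d) - r / (a + I t)", OF dI _ _ i0(2) that])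
    fix t :: real assume "t \<ge> 0"
    show "I t * (\<beta>\<^sub>0 * S t - (\<mu> + d) - r / (a + I t)) \<le> \<beta>\<^sub>0 * I t * S t - (\<mu> + d) * I t - r * I t / (a + I t)"
      by (simp add: algebra_simps)
  next
    fix t :: real assume t: "t \<ge> 0" "I t = 0"
    have "a + I t \<noteq> 0" using t pos by simp
    thus "continuous (at t within {0..}) (\<lambda>t. \<beta>\<^sub>0 * S t - (\<mu> + d) - r / (a + I t))"
      using Sc[OF t(1)] Ic[OF t(1)] by (auto intro!: continuous_intros)
  qed
  have Snn: "S t \<ge> 0" if "t \<ge> 0" for t
  proof (rule stays_nonneg[where f = S and h = "\<lambda>t. A - S t - \<beta>\<^sub>0 * I t", OF dS _ _ i0(1) that])
    fix t :: real assume "t \<ge> 0"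
    show "S t * (A - S t - \<beta>\<^sub>0 * I t) \<le> S t * (A - S t) - \<beta>\<^sub>0 * I t * S t"
      by (simp add: algebra_simps)
  next
    fix t :: real assume t: "t \<ge> 0" "S t = 0"
    thus "continuous (at t within {0..}) (\<lambda>t. A - S t - \<beta>\<^sub>0 * I t)"
      using Sc[OF t(1)] Ic[OF t(1)] by (auto intro!: continuous_intros)
  qed
  have Sle: "A - S t \<ge> 0" if "t \<ge> 0" for t
  proof (rule stays_nonneg[where f = "\<lambda>t. A - S t" and h = "\<lambda>t. - S t"
        and f' = "\<lambda>t. - (S t * (A - S t) - \<beta>\<^sub>0 * I t * S t)", OF _ _ _ _ that])
    fix t :: real assume t: "t \<ge> 0"
    show "((\<lambda>t. A - S t) has_real_derivative - (S t * (A - S t) - \<beta>\<^sub>0 * I t * S t)) (at t within {0..})"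
      using dS[OF t] by (auto intro!: derivative_eq_intros)
    have "0 \<le> \<beta>\<^sub>0 * I t * S t" using Inn[OF t] Snn[OF t] pos by simp
    thus "(A - S t) * - S t \<le> - (S t * (A - S t) - \<beta>\<^sub>0 * I t * S t)"
      by (simp add: algebra_simps)
  next
    fix t :: real assume t: "t \<ge> 0"
    thus "continuous (at t within {0..}) (\<lambda>t. - S t)"
      using Sc[OF t(1)] by (auto intro!: continuous_intros)
  qed (use i0 in simp)
  have Rnn: "R t \<ge> 0" if "t \<ge> 0" for t
  proof (rule stays_nonneg[where f = R and h = "\<lambda>t. - \<mu>", OF dR _ _ i0(3) that])
    fix t :: real assume t: "t \<ge> 0"
    have "0 \<le> r * I t / (a + I t)" using Inn[OF t] pos by simp
    thus "R t * - \<mu> \<le> r * I t / (a + I t) - \<mu> * R t" by (simp add: algebra_simps)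
  qed (auto intro: continuous_intros)
  define C where "C = A * (\<mu> + A) / \<mu>"
  have muC: "\<mu> * C = A * (\<mu> + A)" unfolding C_def using pos by simp
  have Nle: "C - (S t + I t + R t) \<ge> 0" if "t \<ge> 0" for t
  proof (rule stays_nonneg[where f = "\<lambda>t. C - (S t + I t + R t)" and h = "\<lambda>t. - \<mu>"
        and f' = "\<lambda>t. - ((S t * (A - S t) - \<beta>\<^sub>0 * I t * S t) + (\<beta>\<^sub>0 * I t * S t - (\<mu> + d) * I t - r * I t / (a + I t))
             + (r * I t / (a + I t) - \<mu> * R t))", OF _ _ _ _ that])
    fix t :: real assume t: "t \<ge> 0"
    show "((\<lambda>t. C - (S t + I t + R t)) has_real_derivative - ((S t * (A - S t) - \<beta>\<^sub>0 * I t * S t) + (\<beta>\<^sub>0 * I t * S t - (\<mu> + d) * I t - r * I t / (a + I t))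
             + (r * I t / (a + I t) - \<mu> * R t))) (at t within {0..})"
      using dS[OF t] dI[OF t] dR[OF t] by (auto intro!: derivative_eq_intros)
    have h1: "S t * (A - S t) \<le> A * A"
    proof -
      have "S t * (A - S t) \<le> S t * A" using Snn[OF t] by (simp add: mult_left_mono)
      also have "\<dots> \<le> A * A" using Sle[OF t] pos by (simp add: mult_right_mono)
      finally show ?thesis .
    qed
    have h2: "\<mu> * S t \<le> \<mu> * A" using Sle[OF t] pos by simp
    have h3: "0 \<le> d * I t" using Inn[OF t] pos by simp
    show "(C - (S t + I t + R t)) * - \<mu> \<le> - ((S t * (A - S t) - \<beta>\<^sub>0 * I t * S t) + (\<beta>\<^sub>0 * I t * S t - (\<mu> + d) * I t - r * I t / (a + I t))
             + (r * I t / (a + I t) - \<mu> * R t))"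
      using h1 h2 h3 muC by (simp add: algebra_simps)
  qed (use i0 C_def in \<open>auto intro: continuous_intros\<close>)
  show ?thesis
    unfolding regionM_def using Snn Inn Rnn Sle Nle unfolding C_def
    by (auto simp: add_nonneg_nonneg)
qed

end
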